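(* Let $A \in \mathbb{R}^{n\times d}$, $b \in \mathbb{R}^n$ with $Ax=b$ consistent. Let $\lbrace W_1,\ldots,W_N\rbrace \subset \mathbb{R}^n$ and let $w$ be a random variable with $\mathbb{P}[w = W_j] > 0$ for $j=1,\ldots,N$ and $\sum_{j=1}^N \mathbb{P}[w = W_j] = 1$. Let $\lbrace w_l : l \geq 0\rbrace$ be sampled from $\lbrace W_1,\ldots,W_N\rbrace$ without replacement, and once the set is exhausted it is repopulated with its original elements and sampling without replacement is repeated. Let $\mathcal{R}(w) = \mathcal{N}(w)^\perp$ where $\mathcal{N}(w) = \mathrm{span}\lbrace z\in\mathbb{R}^d : \mathbb{P}[z'A'w=0]=1\rbrace$, and $T = \min\lbrace k\geq 0 : \mathrm{span}\lbrace A'w_0,\ldots,A'w_k\rbrace \supset \mathcal{R}(w)\rbrace$. For $x_0 \in \mathbb{R}^d$ and $S_0 = I_d$ define for $l \geq 0$ $$x_{l+1} = \begin{cases} x_l + \dfrac{S_l A' w_l w_l'(b - A x_l)}{w_l' A S_l A' w_l} & S_l A'w_l \neq 0,\\ x_l & \text{otherwise,}\end{cases}\qquad S_{l+1} = \begin{cases} S_l - \dfrac{S_l A' w_l w_l' A S_l}{w_l' A S_l A' w_l} & S_l A' w_l \neq 0,\\ S_l & \text{otherwise.}\end{cases}$$ Then $T \leq N-1$. Moreover, $Ax_{T+1} = b$ for every initialization $x_0$ if $\mathrm{span}\lbrace A'W_1,\ldots,A'W_N\rbrace = \mathrm{row}(A)$, and this holds if $\mathrm{span}\lbrace W_1,\ldots,W_N\rbrace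 = \mathbb{R}^n$.
   Context: $\mathrm{row}(A)$ is the row space of $A$; $A'$ is the transpose. *)

theory Defs
  imports "HOL-Analysis.Analysis" "HOL-Probability.Probability"
begin

definition row_space :: "real^'d^'n \<Rightarrow> (real^'d) set" where
  "row_space A = span (rows A)"

definition null_sp :: "(real^'n) pmf \<Rightarrow> real^'d^'n \<Rightarrow> (real^'d) set" where
  "null_sp p A = span {z. measure_pmf.prob p {v. z \<bullet> (transpose A *v v) = 0} = 1}"

definition range_sp :: "(real^'n) pmf \<Rightarrow> real^'d^'n \<Rightarrow> (real^'d) set" where
  "range_sp p A = orthogonal_comp (null_sp p A)"

definition stop_time :: "(real^'n) pmf \<Rightarrow> real^'d^'n \<Rightarrow> (nat \<Rightarrow> real^'n) \<Rightarrow> nat" where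
  "stop_time p A w = (LEAST k. range_sp p A \<subseteq> span ((\<lambda>l. transpose A *v w l) ` {..k}))"

text \<open>The iteration (x_l, S_l), with x_0 given and S_0 = I_d.
  Denominator w_l' A S_l A' w_l = w_l \<bullet> (A (S_l A' w_l));
  the row vector w_l' A S_l has entries (S_l' A' w_l)_j.\<close>
fun iter :: "real^'d^'n \<Rightarrow> real^'n \<Rightarrow> (nat \<Rightarrow> real^'n) \<Rightarrow> real^'d \<Rightarrow> nat
             \<Rightarrow> (real^'d) \<times> (real^'d^'d)" where
  "iter A b w x0 0 = (x0, mat 1)"
| "iter A b w x0 (Suc l) =
     (let (x, S) = iter A b w x0 l;
          u = S *v (transpose A *v w l);
          r = transpose S *v (transpose A *v w l);
          den = w l \<bullet> (A *v u)
      in if u \<noteq> 0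
         then (x + ((w l \<bullet> (b - A *v x)) / den) *\<^sub>R u,
               S - (\<chi> i j. u $ i * r $ j / den))
         else (x, S))"

end

theory Submission
  imports Defs
begin

lemma span_orth:
  fixes a :: "'a::real_inner"
  assumes "\<forall>y\<in>B. y \<bullet> a = 0" "y \<in> span B"
  shows "y \<bullet> a = 0"
proof -
  have sub: "subspace {y. y \<bullet> a = 0}"
    by (auto simp: subspace_def inner_add_left)
  have "span B \<subseteq> {y. y \<bullet> a = 0}"
    using assms(1) by (intro span_minimal sub) auto
  then show ?thesis using assms(2) by auto
qed

lemma inner_transpose: "(w::real^'n) \<bullet> (A *v y) = (transpose A *v w) \<bullet> (y::real^'d)"
  by (simp add: dot_lmul_matrix)

lemma inner_sym_mat:
  fixes S :: "real^'d^'d"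
  assumes "transpose S = S"
  shows "(S *v y) \<bullet> z = y \<bullet> (S *v z)"
proof -
  have "y \<bullet> (S *v z) = (y v* S) \<bullet> z" by (simp add: dot_lmul_matrix)
  also have "y v* S = transpose S *v y" by simp
  finally show ?thesis using assms by simp
qed

lemma outer_mult:
  fixes u r :: "real^'d"
  shows "(\<chi> i j. u $ i * r $ j / den) *v z = ((r \<bullet> z) / den) *\<^sub>R u"
  by (simp add: vec_eq_iff matrix_vector_mult_def inner_vec_def sum_divide_distrib
      sum_distrib_left algebra_simps)

lemma iter_inv:
  fixes A :: "real^'d^'n"
  assumes xs: "A *v xs = b"
  shows "iter A b w x0 l = (x, S) \<Longrightarrow> transpose S = S
    \<and> (\<forall>k<l. S *v (transpose A *v w k) = 0)
    \<and> (\<forall>z. z - S *v z \<in> span ((\<lambda>k. transpose A *v w k) ` {..<l}))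
    \<and> (\<forall>k<l. (transpose A *v w k) \<bullet> x = (transpose A *v w k) \<bullet> xs)"
proof (induction l arbitrary: x S)
  case 0
  then have "S = mat 1" by simp
  then show ?case by simp
next
  case (Suc l)
  define v where "v = (\<lambda>k. transpose A *v w k)"
  obtain x1 S1 where it: "iter A b w x0 l = (x1, S1)" by (cases "iter A b w x0 l")
  from Suc.IH[OF it] have
    sym: "transpose S1 = S1" and
    kill: "\<forall>k<l. S1 *v v k = 0" and
    rng: "\<forall>z. z - S1 *v z \<in> span (v ` {..<l})" and
    xinv: "\<forall>k<l. v k \<bullet> x1 = v k \<bullet> xs"
    unfolding v_def by blast+
  define u where "u = S1 *v v l"
  define den where "den = w l \<bullet> (A *v u)"
  have r: "transpose S1 *v v l = u" using sym u_def by simp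
  have den': "den = v l \<bullet> u" unfolding den_def v_def by (rule inner_transpose)
  have uorth: "u \<bullet> v k = 0" if "k < l" for k
    using inner_sym_mat[OF sym, of "v l" "v k"] kill that u_def by simp
  have uspan: "u \<bullet> y = 0" if "y \<in> span (v ` {..<l})" for y
    using span_orth[of "v ` {..<l}" u y] that uorth by (auto simp: inner_commute)
  have F3: "v l - u \<in> span (v ` {..<l})" using rng u_def by blast
  have den2: "den = u \<bullet> u"
  proof -
    have "v l = u + (v l - u)" by simp
    then have "v l \<bullet> u = u \<bullet> u + (v l - u) \<bullet> u" by (metis inner_add_left)
    moreover have "(v l - u) \<bullet> u = 0" using uspan[OF F3] by (simp add: inner_commute)
    ultimately show ?thesis using den' by simp
  qed
  have spmono: "span (v ` {..<l}) \<subseteq> span (v ` {..<Suc l})"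
    by (intro span_mono) auto
  have vl_in: "v l \<in> span (v ` {..<Suc l})" by (intro span_base) auto
  show ?case
  proof (cases "u = 0")
    case True
    have step: "iter A b w x0 (Suc l) = (x1, S1)"
      using it True by (simp add: u_def v_def Let_def)
    then have eq: "x = x1" "S = S1" using Suc.prems by auto
    have vlsp: "v l \<in> span (v ` {..<l})" using F3 True by simp
    have "v l \<bullet> (x1 - xs) = 0"
      using span_orth[of "v ` {..<l}" "x1 - xs" "v l"] vlsp xinv
      by (auto simp: inner_diff_right)
    then have "v l \<bullet> x1 = v l \<bullet> xs" by (simp add: inner_diff_right)
    then have d: "\<forall>k<Suc l. v k \<bullet> x = v k \<bullet> xs"
      using xinv eq by (auto simp: less_Suc_eq)
    have b: "\<forall>k<Suc l. S *v v k = 0"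
      using kill eq True u_def by (auto simp: less_Suc_eq)
    have c: "\<forall>z. z - S *v z \<in> span (v ` {..<Suc l})"
      using rng eq spmono by blast
    show ?thesis using sym eq b c d unfolding v_def by blast
  next
    case False
    define c where "c = (w l \<bullet> (b - A *v x1)) / den"
    define M :: "real^'d^'d" where "M = (\<chi> i j. u $ i * u $ j / den)"
    have step: "iter A b w x0 (Suc l) = (x1 + c *\<^sub>R u, S1 - M)"
      using it False r by (simp add: u_def v_def Let_def c_def M_def den_def)
    then have eq: "x = x1 + c *\<^sub>R u" "S = S1 - M" using Suc.prems by auto
    have Mz: "M *v z = ((u \<bullet> z) / den) *\<^sub>R u" for z
      unfolding M_def by (rule outer_mult)
    have denpos: "den \<noteq> 0" using den2 False by simp
    have a: "transpose S = S"
      using sym unfolding eq M_def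
      by (simp add: vec_eq_iff transpose_def mult.commute)
    have b: "\<forall>k<Suc l. S *v v k = 0"
    proof (intro allI impI)
      fix k assume "k < Suc l"
      then consider "k < l" | "k = l" by linarith
      then show "S *v v k = 0"
      proof cases
        case 1 then show ?thesis using kill uorth unfolding eq
          by (simp add: matrix_vector_mult_diff_rdistrib Mz)
      next
        case 2 then show ?thesis using denpos den' unfolding eq
          by (simp add: matrix_vector_mult_diff_rdistrib Mz u_def[symmetric] inner_commute)
      qed
    qed
    have c: "\<forall>z. z - S *v z \<in> span (v ` {..<Suc l})"
    proof
      fix z
      have e: "z - S *v z = (z - S1 *v z) + ((u \<bullet> z) / den) *\<^sub>R u"
        unfolding eq by (simp add: matrix_vector_mult_diff_rdistrib Mz)
      have "z - S1 *v z \<in> span (v ` {..<Suc l})" using rng spmono by blast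
      moreover have "u \<in> span (v ` {..<Suc l})"
      proof -
        have "u = v l - (v l - u)" by simp
        then show ?thesis using vl_in F3 spmono by (metis span_diff subsetD)
      qed
      ultimately show "z - S *v z \<in> span (v ` {..<Suc l})"
        unfolding e by (intro span_add span_scale)
    qed
    have d: "\<forall>k<Suc l. v k \<bullet> x = v k \<bullet> xs"
    proof (intro allI impI)
      fix k assume "k < Suc l"
      then consider "k < l" | "k = l" by linarith
      then show "v k \<bullet> x = v k \<bullet> xs"
      proof cases
        case 1 then show ?thesis using xinv uorth[OF 1] unfolding eq
          by (simp add: inner_add_right inner_commute)
      next
        case 2
        have "v l \<bullet> x = v l \<bullet> x1 + c * den" unfolding eq den'
          by (simp add: inner_add_right)
        also have "c * den = w l \<bullet> (b - A *v x1)" using denpos c_def by simp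
        also have "\<dots> = v l \<bullet> xs - v l \<bullet> x1"
          using inner_transpose[of "w l" A xs] inner_transpose[of "w l" A x1] xs
          by (simp add: inner_diff_right v_def)
        finally show ?thesis using 2 by simp
      qed
    qed
    show ?thesis using a b c d unfolding v_def by blast
  qed
qed

lemma prob_one_iff:
  fixes p :: "'a pmf"
  shows "measure_pmf.prob p {v. P v} = 1 \<longleftrightarrow> (\<forall>v\<in>set_pmf p. P v)"
  by (subst measure_pmf.prob_eq_1) (auto simp: AE_measure_pmf_iff)

lemma range_matrix:
  fixes A :: "real^'d^'n"
  shows "range (\<lambda>x. transpose A *v x) = row_space A"
proof
  show "range (\<lambda>x. transpose A *v x) \<subseteq> row_space A"
    using matrix_vector_mult_in_columnspace[of "transpose A"]
    by (auto simp: row_space_def simp del: transpose_matrix_vector)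
  have sub: "subspace (range (\<lambda>x. transpose A *v x))"
    by (intro linear_subspace_image subspace_UNIV matrix_vector_mul_linear)
  have "rows A \<subseteq> range (\<lambda>x. transpose A *v x)"
  proof
    fix r assume "r \<in> rows A"
    then obtain i where "r = row i A" by (auto simp: rows_def)
    then have "r = column i (transpose A)" by simp
    also have "\<dots> = transpose A *v axis i 1"
      by (simp add: column_def vec_eq_iff matrix_vector_mult_def axis_def
          if_distrib if_distribR cong del: if_weak_cong)
    finally show "r \<in> range (\<lambda>x. transpose A *v x)" by blast
  qed
  then show "row_space A \<subseteq> range (\<lambda>x. transpose A *v x)"
    unfolding row_space_def by (intro span_minimal sub)
qed

theorem mainTheorem7:
  fixes A :: "real^'d^'n" and b :: "real^'n"
    and N :: nat and W :: "nat \<Rightarrow> real^'n"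
    and p :: "(real^'n) pmf" and w :: "nat \<Rightarrow> real^'n"
  assumes consistent: "\<exists>x. A *v x = b"
    and distinct: "inj_on W {1..N}"
    and pos: "\<forall>j\<in>{1..N}. pmf p (W j) > 0"
    and sum1: "(\<Sum>j=1..N. pmf p (W j)) = 1"
    and sampling: "\<forall>m. \<exists>\<sigma>. bij_betw \<sigma> {..<N} {1..N} \<and>
                          (\<forall>i<N. w (m * N + i) = W (\<sigma> i))"
  shows "stop_time p A w \<le> N - 1
    \<and> (span ((\<lambda>j. transpose A *v W j) ` {1..N}) = row_space A \<longrightarrow>
         (\<forall>x0. A *v fst (iter A b w x0 (stop_time p A w + 1)) = b))
    \<and> (span (W ` {1..N}) = UNIV \<longrightarrow>
         span ((\<lambda>j. transpose A *v W j) ` {1..N}) = row_space A)"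
proof -
  define V where "V = (\<lambda>j. transpose A *v W j) ` {1..N}"
  define v where "v = (\<lambda>k. transpose A *v w k)"
  have N1: "N \<ge> 1" using sum1 by (cases N) auto
  have fin: "finite (W ` {1..N})" by simp
  have "measure_pmf.prob p (W ` {1..N}) = 1"
    using sum1 distinct by (simp add: measure_measure_pmf_finite sum.reindex)
  then have "measure_pmf.prob p (UNIV - (W ` {1..N})) = 0"
    using measure_pmf.prob_compl[of "W ` {1..N}" p] by simp
  then have sup1: "set_pmf p \<subseteq> W ` {1..N}"
    by (auto simp: measure_pmf_zero_iff)
  have sup2: "W ` {1..N} \<subseteq> set_pmf p"
    using pos by (auto simp: set_pmf_eq)
  have supp: "set_pmf p = W ` {1..N}" using sup1 sup2 by blast
  have nullsp: "null_sp p A = V\<^sup>\<bottom>"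
  proof -
    have "{z. measure_pmf.prob p {v. z \<bullet> (transpose A *v v) = 0} = 1} = V\<^sup>\<bottom>"
      unfolding prob_one_iff supp V_def orthogonal_comp_def orthogonal_def
      by (auto simp: inner_commute)
    then show ?thesis unfolding null_sp_def
      by (simp add: subspace_orthogonal_comp)
  qed
  have perp: "V\<^sup>\<bottom> = (span V)\<^sup>\<bottom>"
  proof
    show "(span V)\<^sup>\<bottom> \<subseteq> V\<^sup>\<bottom>" by (intro orthogonal_comp_anti_mono span_superset)
    show "V\<^sup>\<bottom> \<subseteq> (span V)\<^sup>\<bottom>"
    proof
      fix x assume "x \<in> V\<^sup>\<bottom>"
      then have "\<forall>y\<in>V. y \<bullet> x = 0" by (auto simp: orthogonal_comp_def orthogonal_def)
      then show "x \<in> (span V)\<^sup>\<bottom>"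
        using span_orth[of V x] by (auto simp: orthogonal_comp_def orthogonal_def)
    qed
  qed
  have R: "range_sp p A = span V"
    unfolding range_sp_def nullsp perp by (simp add: orthogonal_comp_self)
  obtain \<sigma> where \<sigma>: "bij_betw \<sigma> {..<N} {1..N}" "\<forall>i<N. w i = W (\<sigma> i)"
    using sampling[rule_format, of 0] by auto
  have "v ` {..N - 1} = V"
  proof -
    have "{..N-1} = {..<N}" using N1 by auto
    then have "v ` {..N - 1} = (\<lambda>j. transpose A *v W j) ` (\<sigma> ` {..<N})"
      using \<sigma>(2) unfolding v_def by (auto simp: image_image)
    then show ?thesis using \<sigma>(1) unfolding V_def bij_betw_def by simp
  qed
  then have RN: "range_sp p A \<subseteq> span (v ` {..N - 1})" using R by simp
  have T1: "stop_time p A w \<le> N - 1"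
    unfolding stop_time_def using RN unfolding v_def by (intro Least_le)
  have RT: "range_sp p A \<subseteq> span (v ` {..stop_time p A w})"
    unfolding stop_time_def using RN unfolding v_def by (rule LeastI)
  have P2: "\<forall>x0. A *v fst (iter A b w x0 (stop_time p A w + 1)) = b"
    if rs: "span V = row_space A"
  proof
    fix x0
    obtain xs where xs: "A *v xs = b" using consistent by blast
    define T where "T = stop_time p A w"
    obtain x S where it: "iter A b w x0 (T + 1) = (x, S)"
      by (cases "iter A b w x0 (T + 1)")
    have xinv: "\<forall>k<T+1. v k \<bullet> x = v k \<bullet> xs"
      using iter_inv[OF xs it] unfolding v_def by blast
    have "{..<T+1} = {..T}" by auto
    then have RT': "row_space A \<subseteq> span (v ` {..<T+1})"
      using RT rs R unfolding T_def by simp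
    have "(A *v x) $ i = b $ i" for i
    proof -
      have ri: "row i A \<in> row_space A"
        unfolding row_space_def by (intro span_base) (auto simp: rows_def)
      have "row i A \<bullet> (x - xs) = 0"
        using span_orth[of "v ` {..<T+1}" "x - xs" "row i A"] ri RT' xinv
        by (auto simp: inner_diff_right)
      moreover have "row i A = A $ i" by (simp add: row_def vec_eq_iff)
      ultimately show ?thesis using xs
        by (auto simp: matrix_vector_mul_component inner_diff_right)
    qed
    then show "A *v fst (iter A b w x0 (stop_time p A w + 1)) = b"
      using it unfolding T_def by (simp add: vec_eq_iff)
  qed
  have P3: "span V = row_space A" if "span (W ` {1..N}) = UNIV"
  proof -
    have "span V = (\<lambda>x. transpose A *v x) ` span (W ` {1..N})"
      unfolding V_def image_image[symmetric, of "\<lambda>x. transpose A *v x" W]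
      by (intro linear_span_image) (simp add: matrix_vector_mul_linear)
    then show ?thesis using that range_matrix by simp
  qed
  show ?thesis using T1 P2 P3 unfolding V_def by blast
qed

end
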